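(* For every integer $n\ge 1$, the restriction to $\mathfrak{so}(2n+1)$ of the functional $$F_n=\sum_{i=1}^{n}\sum_{j=1}^{n+1-i}e_{i,j}^*$$ is regular on $B_n=\mathfrak{so}(2n+1)$, i.e. the kernel of its Kirillov form on $\mathfrak{so}(2n+1)$ has dimension $n$.
   Context: Over $\mathbb{C}$. $e_{i,j}^*(X)=X_{i,j}$. Here $\mathfrak{so}(2n+1)$ denotes the Lie algebra of $(2n+1)\times(2n+1)$ matrices $X$ satisfying $X_{i,j}=-X_{2n+2-j,2n+2-i}$ for all $i,j$ (skew-symmetric with respect to the antidiagonal), spanned by $e_{i,j}-e_{2n+2-j,2n+2-i}$. For $f\in\mathfrak{g}^*$, $B_f(x,y)=f([x,y])$, $\ker(B_f)=\{x\in\mathfrak{g}: f([x,y])=0\ \forall y\in\mathfrak{g}\}$, and $f$ is regular if $\dim\ker(B_f)=\operatorname{ind}\mathfrak{g}:=\min_{g\in\mathfrak{g}^*}\dim\ker(B_g)$. It is known that $\operatorname{ind}\mathfrak{so}(2n+1)=n$. *)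

theory Defs
  imports Complex_Main "HOL-Library.Function_Algebras"
begin

text \<open>Matrices of size N x N (indices 1..N) are modelled as functions
  nat => nat => complex that vanish outside {1..N} x {1..N}.\<close>

type_synonym cmat = "nat \<Rightarrow> nat \<Rightarrow> complex"

definition cscale :: "complex \<Rightarrow> cmat \<Rightarrow> cmat" where
  "cscale c X = (\<lambda>i j. c * X i j)"

interpretation cmat_vs: vector_space cscale
  by unfold_locales (auto simp: cscale_def fun_eq_iff algebra_simps)

definition supported :: "nat \<Rightarrow> cmat \<Rightarrow> bool" where
  "supported N X \<longleftrightarrow> (\<forall>i j. X i j \<noteq> 0 \<longrightarrow> i \<in> {1..N} \<and> j \<in> {1..N})"

text \<open>so(2n+1): matrices skew-symmetric with respect to the antidiagonal.\<close>
definition so_odd :: "nat \<Rightarrow> cmat set" where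
  "so_odd n = {X. supported (2*n+1) X \<and>
     (\<forall>i\<in>{1..2*n+1}. \<forall>j\<in>{1..2*n+1}. X i j = - X (2*n+2-j) (2*n+2-i))}"

definition mat_mul :: "nat \<Rightarrow> cmat \<Rightarrow> cmat \<Rightarrow> cmat" where
  "mat_mul N X Y = (\<lambda>i j. if i \<in> {1..N} \<and> j \<in> {1..N}
      then (\<Sum>k=1..N. X i k * Y k j) else 0)"

definition lie_br :: "nat \<Rightarrow> cmat \<Rightarrow> cmat \<Rightarrow> cmat" where
  "lie_br N X Y = mat_mul N X Y - mat_mul N Y X"

definition F_fun :: "nat \<Rightarrow> cmat \<Rightarrow> complex" where
  "F_fun n X = (\<Sum>i=1..n. \<Sum>j=1..n+1-i. X i j)"

definition kirillov_ker :: "cmat set \<Rightarrow> (cmat \<Rightarrow> cmat \<Rightarrow> cmat) \<Rightarrow> (cmat \<Rightarrow> complex) \<Rightarrow> cmat set" where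
  "kirillov_ker g br f = {x \<in> g. \<forall>y\<in>g. f (br x y) = 0}"

end

theory Submission
  imports Defs
begin



lemma sum_fun_app2: "(sum f A) i j = (\<Sum>a\<in>A. f a i j)"
  by (induction A rule: infinite_finite_induct) auto

lemma cscale_app[simp]: "cscale c X i j = c * X i j"
  by (simp add: cscale_def)

lemma mat_mul_assoc: "mat_mul m (mat_mul m X Y) Z = mat_mul m X (mat_mul m Y Z)"
proof (rule ext, rule ext)
  fix i j
  show "mat_mul m (mat_mul m X Y) Z i j = mat_mul m X (mat_mul m Y Z) i j"
  proof (cases "i \<in> {1..m} \<and> j \<in> {1..m}")
    case True
    have "mat_mul m (mat_mul m X Y) Z i j = (\<Sum>l=1..m. (\<Sum>k=1..m. X i k * Y k l) * Z l j)"
      using True by (auto simp: mat_mul_def intro!: sum.cong)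
    also have "\<dots> = (\<Sum>l=1..m. \<Sum>k=1..m. X i k * Y k l * Z l j)"
      by (simp add: sum_distrib_right)
    also have "\<dots> = (\<Sum>k=1..m. \<Sum>l=1..m. X i k * Y k l * Z l j)"
      by (rule sum.swap)
    also have "\<dots> = (\<Sum>k=1..m. X i k * (\<Sum>l=1..m. Y k l * Z l j))"
      by (simp add: sum_distrib_left mult.assoc)
    also have "\<dots> = mat_mul m X (mat_mul m Y Z) i j"
      using True by (auto simp: mat_mul_def intro!: sum.cong)
    finally show ?thesis .
  qed (auto simp: mat_mul_def)
qed

lemma mat_mul_neg_left: "mat_mul m (-X) Y = - mat_mul m X Y"
  by (auto simp: mat_mul_def fun_eq_iff sum_negf)
lemma mat_mul_neg_right: "mat_mul m X (-Y) = - mat_mul m X Y"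
  by (auto simp: mat_mul_def fun_eq_iff sum_negf)
lemma mat_mul_diff_left: "mat_mul m (X - Y) Z = mat_mul m X Z - mat_mul m Y Z"
  by (auto simp: mat_mul_def fun_eq_iff sum_subtractf algebra_simps)
lemma mat_mul_diff_right: "mat_mul m Z (X - Y) = mat_mul m Z X - mat_mul m Z Y"
  by (auto simp: mat_mul_def fun_eq_iff sum_subtractf algebra_simps)
lemma mat_mul_scale_left: "mat_mul m (cscale c X) Y = cscale c (mat_mul m X Y)"
  by (auto simp: mat_mul_def fun_eq_iff sum_distrib_left algebra_simps)
lemma mat_mul_scale_right: "mat_mul m X (cscale c Y) = cscale c (mat_mul m X Y)"
  by (auto simp: mat_mul_def fun_eq_iff sum_distrib_left algebra_simps)
lemma mat_mul_sum_left: "finite A \<Longrightarrow> mat_mul m (\<Sum>a\<in>A. f a) Y = (\<Sum>a\<in>A. mat_mul m (f a) Y)"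
proof (rule ext, rule ext)
  fix i j assume A: "finite A"
  show "mat_mul m (\<Sum>a\<in>A. f a) Y i j = (\<Sum>a\<in>A. mat_mul m (f a) Y) i j"
    unfolding sum_fun_app2 mat_mul_def
    by (auto simp: sum_distrib_right intro: sum.swap)
qed
lemma mat_mul_sum_right: "finite A \<Longrightarrow> mat_mul m Y (\<Sum>a\<in>A. f a) = (\<Sum>a\<in>A. mat_mul m Y (f a))"
proof (rule ext, rule ext)
  fix i j assume A: "finite A"
  show "mat_mul m Y (\<Sum>a\<in>A. f a) i j = (\<Sum>a\<in>A. mat_mul m Y (f a)) i j"
    unfolding sum_fun_app2 mat_mul_def
    by (auto simp: sum_distrib_left intro: sum.swap)
qed

lemma sum_ind: "finite A \<Longrightarrow> (\<Sum>k\<in>A. (if b \<and> k = c then 1 else 0) * f k) = (if b \<and> c \<in> A then f c else (0::complex))"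
proof -
  have "\<And>k. (if b \<and> k = c then 1 else 0) * f k = (if k = c then (if b then f k else 0) else 0)" by simp
  then show "finite A \<Longrightarrow> ?thesis" by (simp add: sum.delta)
qed


definition Pm :: "nat \<Rightarrow> cmat" where
  "Pm n i j = (if i\<in>{1..2*n+1} \<and> j\<in>{1..2*n+1} then
     (if i+j \<le> n+1 then 1 else 0) - (if 3*n+3 \<le> i+j then 1 else 0) else 0)"

lemma Pm_sym: "Pm n i j = Pm n j i"
  by (auto simp: Pm_def add.commute)

lemma F_as_sum: "F_fun n Z = (\<Sum>i=1..2*n+1. \<Sum>j=1..2*n+1. if i+j \<le> n+1 then Z i j else 0)"
proof -
  have inner: "(\<Sum>j=1..2*n+1. if i+j \<le> n+1 then Z i j else 0) =
     (if i \<le> n then (\<Sum>j=1..n+1-i. Z i j) else 0)" if "i \<in> {1..2*n+1}" for i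
  proof (cases "i \<le> n")
    case True
    have "(\<Sum>j=1..2*n+1. if i+j \<le> n+1 then Z i j else 0) = (\<Sum>j\<in>{j\<in>{1..2*n+1}. i+j \<le> n+1}. Z i j)"
      by (rule sum.inter_filter[symmetric]) simp
    also have "{j\<in>{1..2*n+1}. i+j \<le> n+1} = {1..n+1-i}" using True by auto
    finally show ?thesis using True by simp
  next
    case False
    then show ?thesis using that by (auto intro!: sum.neutral)
  qed
  have "(\<Sum>i=1..2*n+1. \<Sum>j=1..2*n+1. if i+j \<le> n+1 then Z i j else 0)
      = (\<Sum>i=1..2*n+1. if i \<le> n then (\<Sum>j=1..n+1-i. Z i j) else 0)"
    using inner by (rule sum.cong[OF refl])
  also have "\<dots> = (\<Sum>i\<in>{i\<in>{1..2*n+1}. i \<le> n}. \<Sum>j=1..n+1-i. Z i j)"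
    by (rule sum.inter_filter[symmetric]) simp
  also have "{i\<in>{1..2*n+1}. i \<le> n} = {1..n}" by auto
  finally show ?thesis by (simp add: F_fun_def)
qed

lemma sum_rev_N: "(\<Sum>k=1..2*(n::nat)+1. f k) = (\<Sum>k=1..2*n+1. f (2*n+2-k))"
  by (subst sum.atLeastAtMost_rev) simp

lemma so_entry: "x \<in> so_odd n \<Longrightarrow> a \<in> {1..2*n+1} \<Longrightarrow> b \<in> {1..2*n+1} \<Longrightarrow>
   x a b = - x (2*n+2-b) (2*n+2-a)"
  unfolding so_odd_def by blast

lemma rr: "i \<le> 2*n+2 \<Longrightarrow> 2*n+2-(2*n+2-i) = (i::nat)" by arith

lemma mat_mul_so_swap:
  assumes x: "x \<in> so_odd n" and y: "y \<in> so_odd n" and i: "i\<in>{1..2*n+1}" and j: "j\<in>{1..2*n+1}"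
  shows "mat_mul (2*n+1) y x (2*n+2-j) (2*n+2-i) = mat_mul (2*n+1) x y i j"
proof -
  have "mat_mul (2*n+1) y x (2*n+2-j) (2*n+2-i) = (\<Sum>k=1..2*n+1. y (2*n+2-j) k * x k (2*n+2-i))"
    using i j by (auto simp: mat_mul_def)
  also have "\<dots> = (\<Sum>k=1..2*n+1. y (2*n+2-k) j * x i (2*n+2-k))"
  proof (rule sum.cong[OF refl])
    fix k assume k: "k \<in> {1..2*n+1}"
    have jr: "2*n+2-j \<in> {1..2*n+1}" and ir: "2*n+2-i \<in> {1..2*n+1}" using i j by auto
    have "y (2*n+2-j) k = - y (2*n+2-k) (2*n+2-(2*n+2-j))"
      using so_entry[OF y jr k] .
    moreover have "x k (2*n+2-i) = - x (2*n+2-(2*n+2-i)) (2*n+2-k)"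
      using so_entry[OF x k ir] .
    moreover have "2*n+2-(2*n+2-j) = j" "2*n+2-(2*n+2-i) = i" using i j by auto
    ultimately show "y (2*n+2-j) k * x k (2*n+2-i) = y (2*n+2-k) j * x i (2*n+2-k)"
      using i j by simp
  qed
  also have "\<dots> = (\<Sum>k=1..2*n+1. y k j * x i k)"
    by (subst sum_rev_N) (rule sum.cong, auto)
  also have "\<dots> = mat_mul (2*n+1) x y i j"
    using i j by (auto simp: mat_mul_def mult.commute)
  finally show ?thesis .
qed

lemma lie_skew:
  assumes x: "x \<in> so_odd n" and y: "y \<in> so_odd n" and i: "i\<in>{1..2*n+1}" and j: "j\<in>{1..2*n+1}"
  shows "lie_br (2*n+1) x y i j = - lie_br (2*n+1) x y (2*n+2-j) (2*n+2-i)"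
proof -
  have i': "2*n+2-i \<in> {1..2*n+1}" and j': "2*n+2-j \<in> {1..2*n+1}" using i j by auto
  have "mat_mul (2*n+1) x y (2*n+2-j) (2*n+2-i) = mat_mul (2*n+1) y x i j"
    using mat_mul_so_swap[OF y x i j] .
  then show ?thesis
    using mat_mul_so_swap[OF x y i j] by (simp add: lie_br_def)
qed

lemma G_H:
  fixes n :: nat and Z :: cmat
  assumes Z: "\<And>i j. i\<in>{1..2*n+1} \<Longrightarrow> j\<in>{1..2*n+1} \<Longrightarrow> Z i j = - Z (2*n+2-j) (2*n+2-i)"
  shows "(\<Sum>i=1..2*n+1. \<Sum>j=1..2*n+1. if 3*n+3 \<le> i+j then Z i j else 0)
        = - (\<Sum>i=1..2*n+1. \<Sum>j=1..2*n+1. if i+j \<le> n+1 then Z i j else 0)"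
proof -
  have "(\<Sum>i=1..2*n+1. \<Sum>j=1..2*n+1. if 3*n+3 \<le> i+j then Z i j else 0)
      = (\<Sum>i=1..2*n+1. \<Sum>j=1..2*n+1. if 3*n+3 \<le> (2*n+2-i)+(2*n+2-j) then Z (2*n+2-i) (2*n+2-j) else 0)"
    by (subst sum_rev_N) (rule sum.cong[OF refl], subst sum_rev_N, simp)
  also have "\<dots> = (\<Sum>i=1..2*n+1. \<Sum>j=1..2*n+1. if i+j \<le> n+1 then - Z j i else 0)"
  proof (rule sum.cong[OF refl], rule sum.cong[OF refl])
    fix i j assume i: "i \<in> {1..2*n+1}" and j: "j \<in> {1..2*n+1}"
    have jr: "2*n+2-j \<in> {1..2*n+1}" and ir: "2*n+2-i \<in> {1..2*n+1}" using i j by auto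
    have "Z (2*n+2-i) (2*n+2-j) = - Z (2*n+2-(2*n+2-j)) (2*n+2-(2*n+2-i))"
      using Z[OF ir jr] .
    moreover have "2*n+2-(2*n+2-j) = j" "2*n+2-(2*n+2-i) = i" using i j by auto
    ultimately have "Z (2*n+2-i) (2*n+2-j) = - Z j i" by simp
    then show "(if 3*n+3 \<le> (2*n+2-i)+(2*n+2-j) then Z (2*n+2-i) (2*n+2-j) else 0) =
          (if i+j \<le> n+1 then - Z j i else 0)" using i j by auto
  qed
  also have "\<dots> = (\<Sum>j=1..2*n+1. \<Sum>i=1..2*n+1. if i+j \<le> n+1 then - Z j i else 0)"
    by (rule sum.swap)
  also have "\<dots> = (\<Sum>i=1..2*n+1. \<Sum>j=1..2*n+1. - (if i+j \<le> n+1 then Z i j else 0))"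
    by (intro sum.cong refl) (simp add: add.commute)
  also have "\<dots> = - (\<Sum>i=1..2*n+1. \<Sum>j=1..2*n+1. if i+j \<le> n+1 then Z i j else 0)"
    by (simp only: sum_negf)
  finally show ?thesis .
qed


lemma F_lie:
  assumes x: "x \<in> so_odd n" and y: "y \<in> so_odd n"
  shows "2 * F_fun n (lie_br (2*n+1) x y) =
    (\<Sum>i=1..2*n+1. \<Sum>j=1..2*n+1. Pm n i j * lie_br (2*n+1) x y i j)"
proof -
  let ?Z = "lie_br (2*n+1) x y"
  let ?G = "(\<Sum>i=1..2*n+1. \<Sum>j=1..2*n+1. if i+j \<le> n+1 then ?Z i j else 0)"
  let ?H = "(\<Sum>i=1..2*n+1. \<Sum>j=1..2*n+1. if 3*n+3 \<le> i+j then ?Z i j else 0)"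
  have H: "?H = - ?G" by (rule G_H) (rule lie_skew[OF x y])
  have "(\<Sum>i=1..2*n+1. \<Sum>j=1..2*n+1. Pm n i j * ?Z i j) =
     (\<Sum>i=1..2*n+1. \<Sum>j=1..2*n+1. (if i+j \<le> n+1 then ?Z i j else 0) - (if 3*n+3 \<le> i+j then ?Z i j else 0))"
    by (intro sum.cong refl) (auto simp: Pm_def algebra_simps)
  also have "\<dots> = ?G - ?H" by (simp only: sum_subtractf)
  finally have S: "(\<Sum>i=1..2*n+1. \<Sum>j=1..2*n+1. Pm n i j * ?Z i j) = ?G - ?H" .
  have aux: "\<And>S G H F. S = G - H \<Longrightarrow> H = - G \<Longrightarrow> F = G \<Longrightarrow> 2 * F = (S::complex)" by simp
  show ?thesis by (rule aux[OF S H F_as_sum])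
qed

lemma bilin:
  fixes P x y :: cmat
  assumes Ps: "\<And>i j. P i j = P j i"
  shows "(\<Sum>i=1..m. \<Sum>j=1..m. P i j * lie_br m x y i j) =
    (\<Sum>a=1..m. \<Sum>b=1..m. (mat_mul m P x b a - mat_mul m x P b a) * y a b)"
proof -
  have p1: "(\<Sum>i=1..m. \<Sum>j=1..m. P i j * mat_mul m x y i j) = (\<Sum>a=1..m. \<Sum>b=1..m. mat_mul m P x b a * y a b)"
  proof -
    have "(\<Sum>i=1..m. \<Sum>j=1..m. P i j * mat_mul m x y i j) = (\<Sum>i=1..m. \<Sum>j=1..m. \<Sum>k=1..m. P i j * x i k * y k j)"
      by (intro sum.cong refl) (auto simp: mat_mul_def sum_distrib_left mult.assoc)
    also have "\<dots> = (\<Sum>j=1..m. \<Sum>i=1..m. \<Sum>k=1..m. P i j * x i k * y k j)" by (rule sum.swap)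
    also have "\<dots> = (\<Sum>j=1..m. \<Sum>k=1..m. \<Sum>i=1..m. P i j * x i k * y k j)" by (intro sum.cong refl sum.swap)
    also have "\<dots> = (\<Sum>k=1..m. \<Sum>j=1..m. \<Sum>i=1..m. P i j * x i k * y k j)" by (rule sum.swap)
    also have "\<dots> = (\<Sum>a=1..m. \<Sum>b=1..m. mat_mul m P x b a * y a b)"
      by (intro sum.cong refl) (auto simp: mat_mul_def sum_distrib_right Ps)
    finally show ?thesis .
  qed
  have p2: "(\<Sum>i=1..m. \<Sum>j=1..m. P i j * mat_mul m y x i j) = (\<Sum>a=1..m. \<Sum>b=1..m. mat_mul m x P b a * y a b)"
  proof -
    have "(\<Sum>i=1..m. \<Sum>j=1..m. P i j * mat_mul m y x i j) = (\<Sum>i=1..m. \<Sum>j=1..m. \<Sum>k=1..m. P i j * y i k * x k j)"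
      by (intro sum.cong refl) (auto simp: mat_mul_def sum_distrib_left mult.assoc)
    also have "\<dots> = (\<Sum>i=1..m. \<Sum>k=1..m. \<Sum>j=1..m. P i j * y i k * x k j)" by (intro sum.cong refl sum.swap)
    also have "\<dots> = (\<Sum>a=1..m. \<Sum>b=1..m. mat_mul m x P b a * y a b)"
      by (intro sum.cong refl) (auto simp: mat_mul_def sum_distrib_left sum_distrib_right Ps ac_simps)
    finally show ?thesis .
  qed
  have "(\<Sum>i=1..m. \<Sum>j=1..m. P i j * lie_br m x y i j) =
     (\<Sum>i=1..m. \<Sum>j=1..m. P i j * mat_mul m x y i j - P i j * mat_mul m y x i j)"
    by (simp add: lie_br_def algebra_simps)
  also have "\<dots> = (\<Sum>i=1..m. \<Sum>j=1..m. P i j * mat_mul m x y i j) - (\<Sum>i=1..m. \<Sum>j=1..m. P i j * mat_mul m y x i j)"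
    by (simp add: sum_subtractf)
  also have "\<dots> = (\<Sum>a=1..m. \<Sum>b=1..m. mat_mul m P x b a * y a b) - (\<Sum>a=1..m. \<Sum>b=1..m. mat_mul m x P b a * y a b)"
    unfolding p1 p2 ..
  also have "\<dots> = (\<Sum>a=1..m. \<Sum>b=1..m. (mat_mul m P x b a - mat_mul m x P b a) * y a b)"
    by (simp only: left_diff_distrib sum_subtractf)
  finally show ?thesis .
qed


lemma Pm_so: "Pm n \<in> so_odd n"
  unfolding so_odd_def supported_def by (auto simp: Pm_def)

lemma double_delta:
  fixes f :: "nat \<Rightarrow> nat \<Rightarrow> complex"
  assumes "a \<in> {1..m}" "b \<in> {1..m}"
  shows "(\<Sum>a'=1..m. \<Sum>b'=1..m. f a' b' * (if a' = a \<and> b' = b then 1 else 0)) = f a b"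
proof -
  have "\<And>a' b'. f a' b' * (if a' = a \<and> b' = b then 1 else 0) = (if a' = a then (if b' = b then f a' b' else 0) else 0)"
    by simp
  moreover have "\<And>a'. (\<Sum>b'=1..m. if a' = a then (if b' = b then f a' b' else 0) else 0) = (if a' = a then f a' b else 0)"
    using assms by (auto simp: sum.delta)
  ultimately show ?thesis using assms by (simp add: sum.delta)
qed

lemma mat_mul_out: "\<not> (i \<in> {1..m} \<and> j \<in> {1..m}) \<Longrightarrow> mat_mul m X Y i j = 0"
  by (auto simp: mat_mul_def)

lemma ker_char:
  "x \<in> kirillov_ker (so_odd n) (lie_br (2*n+1)) (F_fun n) \<longleftrightarrow>
   x \<in> so_odd n \<and> mat_mul (2*n+1) (Pm n) x = mat_mul (2*n+1) x (Pm n)"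
proof
  assume K: "x \<in> kirillov_ker (so_odd n) (lie_br (2*n+1)) (F_fun n)"
  then have x: "x \<in> so_odd n" and F0: "\<And>y. y \<in> so_odd n \<Longrightarrow> F_fun n (lie_br (2*n+1) x y) = 0"
    by (auto simp: kirillov_ker_def)
  let ?D = "lie_br (2*n+1) (Pm n) x"
  have D0: "?D b a = 0" if a: "a \<in> {1..2*n+1}" and b: "b \<in> {1..2*n+1}" for a b
  proof -
    have br: "2*n+2-b \<in> {1..2*n+1}" "2*n+2-a \<in> {1..2*n+1}" using a b by auto
    define y :: cmat where "y = (\<lambda>i j. (if i = a \<and> j = b then 1 else 0) - (if i = 2*n+2-b \<and> j = 2*n+2-a then 1 else 0))"
    have y: "y \<in> so_odd n"
    proof -
      have e1: "(2*n+2-j = a \<and> 2*n+2-i = b) = (i = 2*n+2-b \<and> j = 2*n+2-a)"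
        if "i \<in> {1..2*n+1}" "j \<in> {1..2*n+1}" for i j using that a b by auto
      have e2: "(2*n+2-j = 2*n+2-b \<and> 2*n+2-i = 2*n+2-a) = (i = a \<and> j = b)"
        if "i \<in> {1..2*n+1}" "j \<in> {1..2*n+1}" for i j using that a b by auto
      have "(i = a \<and> j = b) \<or> (i = 2*n+2-b \<and> j = 2*n+2-a)" if "y i j \<noteq> 0" for i j
      proof -
        have aux: "\<And>A B. (if A then 1 else 0) - (if B then 1 else 0) \<noteq> (0::complex) \<Longrightarrow> A \<or> B" by (auto split: if_splits)
        show ?thesis by (rule aux) (use that in \<open>simp add: y_def\<close>)
      qed
      then have "supported (2*n+1) y" unfolding supported_def using a b br by blast
      moreover have "y i j = - y (2*n+2-j) (2*n+2-i)" if "i \<in> {1..2*n+1}" "j \<in> {1..2*n+1}" for i j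
        unfolding y_def by (simp only: e1[OF that] e2[OF that]) simp
      ultimately show ?thesis unfolding so_odd_def by blast
    qed
    have "0 = 2 * F_fun n (lie_br (2*n+1) x y)" using F0[OF y] by simp
    also have "\<dots> = (\<Sum>a'=1..2*n+1. \<Sum>b'=1..2*n+1. ?D b' a' * y a' b')"
      unfolding F_lie[OF x y] by (subst bilin[OF Pm_sym]) (simp add: lie_br_def)
    also have "\<dots> = (\<Sum>a'=1..2*n+1. \<Sum>b'=1..2*n+1. ?D b' a' * (if a' = a \<and> b' = b then 1 else 0))
       - (\<Sum>a'=1..2*n+1. \<Sum>b'=1..2*n+1. ?D b' a' * (if a' = 2*n+2-b \<and> b' = 2*n+2-a then 1 else 0))"
      unfolding y_def by (simp only: right_diff_distrib sum_subtractf)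
    also have "\<dots> = ?D b a - ?D (2*n+2-a) (2*n+2-b)"
      by (simp only: double_delta[OF a b] double_delta[OF br])
    also have "?D (2*n+2-a) (2*n+2-b) = - ?D b a"
      using lie_skew[OF Pm_so x b a] by simp
    finally show ?thesis by simp
  qed
  have "mat_mul (2*n+1) (Pm n) x = mat_mul (2*n+1) x (Pm n)"
  proof (rule ext, rule ext)
    fix i j
    show "mat_mul (2*n+1) (Pm n) x i j = mat_mul (2*n+1) x (Pm n) i j"
    proof (cases "i \<in> {1..2*n+1} \<and> j \<in> {1..2*n+1}")
      case True then show ?thesis using D0[of j i] by (simp add: lie_br_def)
    qed (simp add: mat_mul_out)
  qed
  with x show "x \<in> so_odd n \<and> mat_mul (2*n+1) (Pm n) x = mat_mul (2*n+1) x (Pm n)" by simp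
next
  assume A: "x \<in> so_odd n \<and> mat_mul (2*n+1) (Pm n) x = mat_mul (2*n+1) x (Pm n)"
  then have x: "x \<in> so_odd n" and C: "mat_mul (2*n+1) (Pm n) x = mat_mul (2*n+1) x (Pm n)" by auto
  have "F_fun n (lie_br (2*n+1) x y) = 0" if y: "y \<in> so_odd n" for y
  proof -
    have "2 * F_fun n (lie_br (2*n+1) x y) = 0"
      unfolding F_lie[OF x y] bilin[OF Pm_sym] C by simp
    then show ?thesis by simp
  qed
  with x show "x \<in> kirillov_ker (so_odd n) (lie_br (2*n+1)) (F_fun n)"
    by (auto simp: kirillov_ker_def)
qed




declare sum.cl_ivl_Suc[simp del]

lemma mat_mul_in: "i \<in> {1..m} \<Longrightarrow> j \<in> {1..m} \<Longrightarrow> mat_mul m X Y i j = (\<Sum>k\<in>{1..m}. X i k * Y k j)"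
  by (simp add: mat_mul_def)

definition Qm :: "nat \<Rightarrow> cmat" where
  "Qm n i j = (if i\<in>{1..2*n+1} \<and> j\<in>{1..2*n+1} then
    (if i \<le> n \<and> j = n+1-i then 1 else 0) - (if 2 \<le> i \<and> i \<le> n \<and> j = n+2-i then 1 else 0)
  - (if n+2 \<le> i \<and> j = 3*n+3-i then 1 else 0) + (if n+2 \<le> i \<and> i \<le> 2*n \<and> j = 3*n+2-i then 1 else 0) else 0)"

definition Em :: "nat \<Rightarrow> cmat" where
  "Em n i j = (if i\<in>{1..2*n+1} \<and> i \<noteq> n+1 \<and> j = i then 1 else 0)"

lemma Qm_in: "i\<in>{1..2*n+1} \<Longrightarrow> j\<in>{1..2*n+1} \<Longrightarrow> Qm n i j =
    (if i \<le> n \<and> j = n+1-i then 1 else 0) - (if (2 \<le> i \<and> i \<le> n) \<and> j = n+2-i then 1 else 0)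
  - (if n+2 \<le> i \<and> j = 3*n+3-i then 1 else 0) + (if (n+2 \<le> i \<and> i \<le> 2*n) \<and> j = 3*n+2-i then 1 else 0)"
proof -
  assume "i\<in>{1..2*n+1}" "j\<in>{1..2*n+1}"
  then have c: "i\<in>{1..2*n+1} \<and> j\<in>{1..2*n+1}" by simp
  show ?thesis unfolding Qm_def conj_assoc by (simp only: if_P[OF c])
qed

lemma sum_ind2: "finite A \<Longrightarrow> (\<Sum>k\<in>A. f k * (if b \<and> k = c then 1 else 0)) = (if b \<and> c \<in> A then f c else (0::complex))"
  using sum_ind[of A b c f] by (simp add: mult.commute)

lemma ind_simp: "(b \<Longrightarrow> c \<in> A) \<Longrightarrow> (if b \<and> c \<in> A then f else 0) = (if b then f else 0)" by auto

lemma Qm_sym: "Qm n i j = Qm n j i"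
proof (cases "i\<in>{1..2*n+1} \<and> j\<in>{1..2*n+1}")
  case True
  then have i: "i\<in>{1..2*n+1}" and j: "j\<in>{1..2*n+1}" by auto
  have e1: "(i \<le> n \<and> j = n+1-i) = (j \<le> n \<and> i = n+1-j)" using i j by (simp, arith)
  have e2: "((2 \<le> i \<and> i \<le> n) \<and> j = n+2-i) = ((2 \<le> j \<and> j \<le> n) \<and> i = n+2-j)" using i j by (simp, arith)
  have e3: "(n+2 \<le> i \<and> j = 3*n+3-i) = (n+2 \<le> j \<and> i = 3*n+3-j)" using i j by (simp, arith)
  have e4: "((n+2 \<le> i \<and> i \<le> 2*n) \<and> j = 3*n+2-i) = ((n+2 \<le> j \<and> j \<le> 2*n) \<and> i = 3*n+2-j)" using i j by (simp, arith)
  show ?thesis unfolding Qm_in[OF i j] Qm_in[OF j i] by (simp only: e1 e2 e3 e4)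
next
  case False
  then have "\<not> (j\<in>{1..2*n+1} \<and> i\<in>{1..2*n+1})" by blast
  with False show ?thesis unfolding Qm_def by (simp only: if_not_P if_False)
qed

lemma Qleft: "mat_mul (2*n+1) (Qm n) Y i j = (if i\<in>{1..2*n+1} \<and> j\<in>{1..2*n+1} then
   (if i \<le> n then Y (n+1-i) j else 0) - (if 2 \<le> i \<and> i \<le> n then Y (n+2-i) j else 0)
 - (if n+2 \<le> i then Y (3*n+3-i) j else 0) + (if n+2 \<le> i \<and> i \<le> 2*n then Y (3*n+2-i) j else 0) else 0)"
proof (cases "i\<in>{1..2*n+1} \<and> j\<in>{1..2*n+1}")
  case True
  let ?R = "{1..2*n+1}"
  have "mat_mul (2*n+1) (Qm n) Y i j = (\<Sum>k\<in>?R. (if i \<le> n \<and> k = n+1-i then 1 else 0) * Y k j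
     - (if (2 \<le> i \<and> i \<le> n) \<and> k = n+2-i then 1 else 0) * Y k j
     - (if n+2 \<le> i \<and> k = 3*n+3-i then 1 else 0) * Y k j
     + (if (n+2 \<le> i \<and> i \<le> 2*n) \<and> k = 3*n+2-i then 1 else 0) * Y k j)"
    unfolding mat_mul_in[OF conjunct1[OF True] conjunct2[OF True]]
    by (intro sum.cong refl) (simp only: Qm_in[OF conjunct1[OF True]] left_diff_distrib distrib_right)
  also have "\<dots> = (\<Sum>k\<in>?R. (if i \<le> n \<and> k = n+1-i then 1 else 0) * Y k j)
     - (\<Sum>k\<in>?R. (if (2 \<le> i \<and> i \<le> n) \<and> k = n+2-i then 1 else 0) * Y k j)
     - (\<Sum>k\<in>?R. (if n+2 \<le> i \<and> k = 3*n+3-i then 1 else 0) * Y k j)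
     + (\<Sum>k\<in>?R. (if (n+2 \<le> i \<and> i \<le> 2*n) \<and> k = 3*n+2-i then 1 else 0) * Y k j)"
    by (simp only: sum.distrib sum_subtractf)
  also have "\<dots> = (if i \<le> n then Y (n+1-i) j else 0) - (if 2 \<le> i \<and> i \<le> n then Y (n+2-i) j else 0)
 - (if n+2 \<le> i then Y (3*n+3-i) j else 0) + (if n+2 \<le> i \<and> i \<le> 2*n then Y (3*n+2-i) j else 0)"
  proof -
    have c1: "i \<le> n \<Longrightarrow> n+1-i \<in> ?R" and c2: "2 \<le> i \<and> i \<le> n \<Longrightarrow> n+2-i \<in> ?R"
     and c3: "n+2 \<le> i \<Longrightarrow> 3*n+3-i \<in> ?R" and c4: "n+2 \<le> i \<and> i \<le> 2*n \<Longrightarrow> 3*n+2-i \<in> ?R"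
      using True by auto
    show ?thesis unfolding sum_ind[OF finite_atLeastAtMost]
      by (simp only: ind_simp[OF c1] ind_simp[OF c2] ind_simp[OF c3] ind_simp[OF c4])
  qed
  finally show ?thesis using True by (simp only: if_True simp_thms)
qed (auto simp: mat_mul_def)

lemma Qright: "mat_mul (2*n+1) Y (Qm n) i j = (if i\<in>{1..2*n+1} \<and> j\<in>{1..2*n+1} then
   (if j \<le> n then Y i (n+1-j) else 0) - (if 2 \<le> j \<and> j \<le> n then Y i (n+2-j) else 0)
 - (if n+2 \<le> j then Y i (3*n+3-j) else 0) + (if n+2 \<le> j \<and> j \<le> 2*n then Y i (3*n+2-j) else 0) else 0)"
proof (cases "i\<in>{1..2*n+1} \<and> j\<in>{1..2*n+1}")
  case True
  let ?R = "{1..2*n+1}"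
  have "mat_mul (2*n+1) Y (Qm n) i j = (\<Sum>k\<in>?R. Y i k * (if j \<le> n \<and> k = n+1-j then 1 else 0)
     - Y i k * (if (2 \<le> j \<and> j \<le> n) \<and> k = n+2-j then 1 else 0)
     - Y i k * (if n+2 \<le> j \<and> k = 3*n+3-j then 1 else 0)
     + Y i k * (if (n+2 \<le> j \<and> j \<le> 2*n) \<and> k = 3*n+2-j then 1 else 0))"
    unfolding mat_mul_in[OF conjunct1[OF True] conjunct2[OF True]]
    by (intro sum.cong refl) (simp only: Qm_sym[of n _ j] Qm_in[OF conjunct2[OF True]] right_diff_distrib distrib_left)
  also have "\<dots> = (\<Sum>k\<in>?R. Y i k * (if j \<le> n \<and> k = n+1-j then 1 else 0))
     - (\<Sum>k\<in>?R. Y i k * (if (2 \<le> j \<and> j \<le> n) \<and> k = n+2-j then 1 else 0))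
     - (\<Sum>k\<in>?R. Y i k * (if n+2 \<le> j \<and> k = 3*n+3-j then 1 else 0))
     + (\<Sum>k\<in>?R. Y i k * (if (n+2 \<le> j \<and> j \<le> 2*n) \<and> k = 3*n+2-j then 1 else 0))"
    by (simp only: sum.distrib sum_subtractf)
  also have "\<dots> = (if j \<le> n then Y i (n+1-j) else 0) - (if 2 \<le> j \<and> j \<le> n then Y i (n+2-j) else 0)
 - (if n+2 \<le> j then Y i (3*n+3-j) else 0) + (if n+2 \<le> j \<and> j \<le> 2*n then Y i (3*n+2-j) else 0)"
  proof -
    have c1: "j \<le> n \<Longrightarrow> n+1-j \<in> ?R" and c2: "2 \<le> j \<and> j \<le> n \<Longrightarrow> n+2-j \<in> ?R"
     and c3: "n+2 \<le> j \<Longrightarrow> 3*n+3-j \<in> ?R" and c4: "n+2 \<le> j \<and> j \<le> 2*n \<Longrightarrow> 3*n+2-j \<in> ?R"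
      using True by auto
    show ?thesis unfolding sum_ind2[OF finite_atLeastAtMost]
      by (simp only: ind_simp[OF c1] ind_simp[OF c2] ind_simp[OF c3] ind_simp[OF c4])
  qed
  finally show ?thesis using True by (simp only: if_True simp_thms)
qed (auto simp: mat_mul_def)

lemma Eleft: "mat_mul (2*n+1) (Em n) Y i j = (if i\<in>{1..2*n+1} \<and> j\<in>{1..2*n+1} \<and> i \<noteq> n+1 then Y i j else 0)"
proof (cases "i\<in>{1..2*n+1} \<and> j\<in>{1..2*n+1}")
  case True
  have "mat_mul (2*n+1) (Em n) Y i j = (\<Sum>k\<in>{1..2*n+1}. (if (i \<noteq> n+1) \<and> k = i then 1 else 0) * Y k j)"
    unfolding mat_mul_in[OF conjunct1[OF True] conjunct2[OF True]] using True
    by (intro sum.cong refl) (simp add: Em_def)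
  also have "\<dots> = (if i \<noteq> n+1 then Y i j else 0)"
    unfolding sum_ind[OF finite_atLeastAtMost] using True by simp
  finally show ?thesis using True by simp
qed (auto simp: mat_mul_out)

lemma Eright: "mat_mul (2*n+1) Y (Em n) i j = (if i\<in>{1..2*n+1} \<and> j\<in>{1..2*n+1} \<and> j \<noteq> n+1 then Y i j else 0)"
proof (cases "i\<in>{1..2*n+1} \<and> j\<in>{1..2*n+1}")
  case True
  have "mat_mul (2*n+1) Y (Em n) i j = (\<Sum>k\<in>{1..2*n+1}. (if (j \<noteq> n+1) \<and> k = j then 1 else 0) * Y i k)"
    unfolding mat_mul_in[OF conjunct1[OF True] conjunct2[OF True]] using True
    by (intro sum.cong refl) (auto simp: Em_def)
  also have "\<dots> = (if j \<noteq> n+1 then Y i j else 0)"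
    unfolding sum_ind[OF finite_atLeastAtMost] using True by simp
  finally show ?thesis using True by simp
qed (auto simp: mat_mul_out)


lemma Pm_in: "i\<in>{1..2*n+1} \<Longrightarrow> j\<in>{1..2*n+1} \<Longrightarrow>
   Pm n i j = (if i+j \<le> n+1 then 1 else 0) - (if 3*n+3 \<le> i+j then 1 else 0)"
  unfolding Pm_def by (simp only: if_P simp_thms)

lemma QP: "mat_mul (2*n+1) (Qm n) (Pm n) = Em n"
proof (intro ext)
  fix i j
  show "mat_mul (2*n+1) (Qm n) (Pm n) i j = Em n i j"
  proof (cases "i\<in>{1..2*n+1} \<and> j\<in>{1..2*n+1}")
    case False
    then show ?thesis unfolding Qleft Em_def by auto
  next
    case True
    then have i: "i\<in>{1..2*n+1}" and j: "j\<in>{1..2*n+1}" by auto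
    consider (a) "i \<le> n" | (b) "i = n+1" | (c) "n+2 \<le> i" by linarith
    then show ?thesis
    proof cases
      case a
      have p1: "Pm n (n+1-i) j = (if j \<le> i then 1 else 0)"
      proof -
        have r: "n+1-i \<in> {1..2*n+1}" using a i by auto
        have "(n+1-i+j \<le> n+1) = (j \<le> i)" "\<not> (3*n+3 \<le> n+1-i+j)" using a i j by auto
        then show ?thesis unfolding Pm_in[OF r j] by simp
      qed
      have p2: "(if 2 \<le> i \<and> i \<le> n then Pm n (n+2-i) j else 0) = (if j < i then 1 else 0)"
      proof (cases "2 \<le> i")
        case True
        have r: "n+2-i \<in> {1..2*n+1}" using a True by auto
        have "(n+2-i+j \<le> n+1) = (j < i)" "\<not> (3*n+3 \<le> n+2-i+j)" using a True i j by auto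
        then show ?thesis unfolding Pm_in[OF r j] using True a by simp
      next
        case False then show ?thesis using i j by auto
      qed
      have "mat_mul (2*n+1) (Qm n) (Pm n) i j = (if j \<le> i then 1 else 0) - (if j < i then 1 else 0)"
        unfolding Qleft using i j a p1 p2 by simp
      also have "\<dots> = Em n i j" unfolding Em_def using i j a by auto
      finally show ?thesis .
    next
      case b
      then show ?thesis unfolding Qleft Em_def using i j by auto
    next
      case c
      have p1: "Pm n (3*n+3-i) j = - (if i \<le> j then 1 else 0)"
      proof -
        have r: "3*n+3-i \<in> {1..2*n+1}" using c i by auto
        have "\<not> (3*n+3-i+j \<le> n+1)" "(3*n+3 \<le> 3*n+3-i+j) = (i \<le> j)" using c i j by auto
        then show ?thesis unfolding Pm_in[OF r j] by simp
      qed
      have p2: "(if n+2 \<le> i \<and> i \<le> 2*n then Pm n (3*n+2-i) j else 0) = - (if i < j then 1 else 0)"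
      proof (cases "i \<le> 2*n")
        case True
        have r: "3*n+2-i \<in> {1..2*n+1}" using c True by auto
        have "\<not> (3*n+2-i+j \<le> n+1)" "(3*n+3 \<le> 3*n+2-i+j) = (i < j)" using c True i j by auto
        then show ?thesis unfolding Pm_in[OF r j] using True c by simp
      next
        case False then show ?thesis using i j by auto
      qed
      have "mat_mul (2*n+1) (Qm n) (Pm n) i j = (if i \<le> j then 1 else 0) - (if i < j then 1 else 0)"
        unfolding Qleft using i j c p1 p2 by simp
      also have "\<dots> = Em n i j" unfolding Em_def using i j c by auto
      finally show ?thesis .
    qed
  qed
qed

lemma mat_mul_sym: "(\<And>a b. X a b = X b a) \<Longrightarrow> (\<And>a b. Y a b = Y b a) \<Longrightarrow>
   mat_mul m X Y i j = mat_mul m Y X j i"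
  unfolding mat_mul_def by (auto simp: mult.commute)

lemma PQ: "mat_mul (2*n+1) (Pm n) (Qm n) = Em n"
proof (intro ext)
  fix i j
  have "mat_mul (2*n+1) (Pm n) (Qm n) i j = mat_mul (2*n+1) (Qm n) (Pm n) j i"
    by (rule mat_mul_sym) (simp_all add: Pm_sym Qm_sym)
  also have "\<dots> = Em n i j" unfolding QP by (auto simp: Em_def)
  finally show "mat_mul (2*n+1) (Pm n) (Qm n) i j = Em n i j" .
qed




lemma supp_out: "supported m x \<Longrightarrow> \<not> (i \<in> {1..m} \<and> j \<in> {1..m}) \<Longrightarrow> x i j = 0"
  unfolding supported_def by auto

lemma so_supp: "x \<in> so_odd n \<Longrightarrow> supported (2*n+1) x"
  unfolding so_odd_def by auto

lemma Pm_col: "Pm n k (Suc n) = 0"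
  unfolding Pm_def by auto

lemma ker_col:
  assumes x: "x \<in> so_odd n" and C: "mat_mul (2*n+1) (Pm n) x = mat_mul (2*n+1) x (Pm n)"
  shows "x i (n+1) = 0" "x (n+1) i = 0"
proof -
  have EX: "mat_mul (2*n+1) (Em n) x = mat_mul (2*n+1) (mat_mul (2*n+1) (Qm n) x) (Pm n)"
    by (metis QP C mat_mul_assoc)
  have col: "x i (n+1) = 0" for i
  proof (cases "i \<in> {1..2*n+1}")
    case True
    show ?thesis
    proof (cases "i = n+1")
      case False
      have "x i (n+1) = mat_mul (2*n+1) (Em n) x i (n+1)" unfolding Eleft using True False by auto
      also have "\<dots> = mat_mul (2*n+1) (mat_mul (2*n+1) (Qm n) x) (Pm n) i (n+1)"
        by (rule fun_cong[OF fun_cong[OF EX]])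
      also have "\<dots> = 0" unfolding mat_mul_def by (simp add: Pm_col)
      finally show ?thesis .
    next
      case T: True
      have "x (n+1) (n+1) = - x (2*n+2-(n+1)) (2*n+2-(n+1))"
        using so_entry[OF x, of "n+1" "n+1"] by simp
      then show ?thesis using T by simp
    qed
  next
    case False then show ?thesis using supp_out[OF so_supp[OF x]] by auto
  qed
  show "x i (n+1) = 0" by (rule col)
  show "x (n+1) i = 0"
  proof (cases "i \<in> {1..2*n+1}")
    case True
    have "x (n+1) i = - x (2*n+2-i) (2*n+2-(n+1))" using so_entry[OF x, of "n+1" i] True by simp
    also have "2*n+2-(n+1) = n+1" by simp
    finally show ?thesis using col by simp
  next
    case False then show ?thesis using supp_out[OF so_supp[OF x]] by auto
  qed
qed

lemma E_id:
  assumes s: "supported (2*n+1) x" and c: "\<And>i. x i (n+1) = 0" and r: "\<And>i. x (n+1) i = 0"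
  shows "mat_mul (2*n+1) (Em n) x = x" "mat_mul (2*n+1) x (Em n) = x"
proof -
  show "mat_mul (2*n+1) (Em n) x = x"
    by (intro ext) (unfold Eleft, auto simp: r c r[folded Suc_eq_plus1] c[folded Suc_eq_plus1] supp_out[OF s])
  show "mat_mul (2*n+1) x (Em n) = x"
    by (intro ext) (unfold Eright, auto simp: r c r[folded Suc_eq_plus1] c[folded Suc_eq_plus1] supp_out[OF s])
qed

lemma ker_Q:
  assumes x: "x \<in> so_odd n" and C: "mat_mul (2*n+1) (Pm n) x = mat_mul (2*n+1) x (Pm n)"
  shows "mat_mul (2*n+1) (Qm n) x = mat_mul (2*n+1) x (Qm n)"
proof -
  note E = E_id[OF so_supp[OF x] ker_col[OF x C]]
  let ?m = "mat_mul (2*n+1)"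
  have "?m (Qm n) x = ?m (Qm n) (?m x (Em n))" by (simp only: E)
  also have "\<dots> = ?m (Qm n) (?m (?m x (Pm n)) (Qm n))" by (simp only: PQ[symmetric] mat_mul_assoc)
  also have "\<dots> = ?m (?m (?m (Qm n) (Pm n)) x) (Qm n)" by (simp only: C[symmetric] mat_mul_assoc)
  also have "\<dots> = ?m x (Qm n)" by (simp only: QP E)
  finally show ?thesis .
qed

lemma Q_ker:
  assumes s: "supported (2*n+1) x" and c: "\<And>i. x i (n+1) = 0" and r: "\<And>i. x (n+1) i = 0"
    and C: "mat_mul (2*n+1) (Qm n) x = mat_mul (2*n+1) x (Qm n)"
  shows "mat_mul (2*n+1) (Pm n) x = mat_mul (2*n+1) x (Pm n)"
proof -
  note E = E_id[OF s c r]
  let ?m = "mat_mul (2*n+1)"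
  have "?m (Pm n) x = ?m (Pm n) (?m x (Em n))" by (simp only: E)
  also have "\<dots> = ?m (Pm n) (?m (?m x (Qm n)) (Pm n))" by (simp only: QP[symmetric] mat_mul_assoc)
  also have "\<dots> = ?m (?m (?m (Pm n) (Qm n)) x) (Pm n)" by (simp only: C[symmetric] mat_mul_assoc)
  also have "\<dots> = ?m x (Pm n)" by (simp only: PQ E)
  finally show ?thesis .
qed




definition Bn :: "nat \<Rightarrow> cmat" where
  "Bn n i j = (if i\<in>{1..n} \<and> j\<in>{1..n} then (if j = n+1-i then 1 else 0) - (if 2 \<le> i \<and> j = n+2-i then 1 else 0) else 0)"

lemma Bn_in: "i\<in>{1..n} \<Longrightarrow> j\<in>{1..n} \<Longrightarrow> Bn n i j = (if True \<and> j = n+1-i then 1 else 0) - (if 2 \<le> i \<and> j = n+2-i then 1 else 0)"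
  unfolding Bn_def by simp

lemma Bn_sym: "Bn n i j = Bn n j i"
  unfolding Bn_def by (rule if_cong) auto

lemma Bleft: "mat_mul n (Bn n) Y i j = (if i\<in>{1..n} \<and> j\<in>{1..n} then
   Y (n+1-i) j - (if 2 \<le> i then Y (n+2-i) j else 0) else 0)"
proof (cases "i\<in>{1..n} \<and> j\<in>{1..n}")
  case True
  let ?R = "{1..n}"
  have "mat_mul n (Bn n) Y i j = (\<Sum>k\<in>?R. (if True \<and> k = n+1-i then 1 else 0) * Y k j
     - (if 2 \<le> i \<and> k = n+2-i then 1 else 0) * Y k j)"
    unfolding mat_mul_in[OF conjunct1[OF True] conjunct2[OF True]]
    by (intro sum.cong refl) (simp only: Bn_in[OF conjunct1[OF True]] left_diff_distrib)
  also have "\<dots> = (\<Sum>k\<in>?R. (if True \<and> k = n+1-i then 1 else 0) * Y k j)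
     - (\<Sum>k\<in>?R. (if 2 \<le> i \<and> k = n+2-i then 1 else 0) * Y k j)"
    by (simp only: sum_subtractf)
  also have "\<dots> = Y (n+1-i) j - (if 2 \<le> i then Y (n+2-i) j else 0)"
  proof -
    have c1: "True \<Longrightarrow> n+1-i \<in> ?R" and c2: "2 \<le> i \<Longrightarrow> n+2-i \<in> ?R" using True by auto
    show ?thesis unfolding sum_ind[OF finite_atLeastAtMost]
      by (simp only: ind_simp[OF c1] ind_simp[OF c2] c1[OF TrueI] if_True simp_thms)
  qed
  finally show ?thesis using True by (simp only: if_True simp_thms)
qed (auto simp: mat_mul_def)

lemma Bright: "mat_mul n Y (Bn n) i j = (if i\<in>{1..n} \<and> j\<in>{1..n} then
   Y i (n+1-j) - (if 2 \<le> j then Y i (n+2-j) else 0) else 0)"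
proof (cases "i\<in>{1..n} \<and> j\<in>{1..n}")
  case True
  let ?R = "{1..n}"
  have "mat_mul n Y (Bn n) i j = (\<Sum>k\<in>?R. Y i k * (if True \<and> k = n+1-j then 1 else 0)
     - Y i k * (if 2 \<le> j \<and> k = n+2-j then 1 else 0))"
    unfolding mat_mul_in[OF conjunct1[OF True] conjunct2[OF True]]
    by (intro sum.cong refl) (simp only: Bn_sym[of n _ j] Bn_in[OF conjunct2[OF True]] right_diff_distrib)
  also have "\<dots> = (\<Sum>k\<in>?R. Y i k * (if True \<and> k = n+1-j then 1 else 0))
     - (\<Sum>k\<in>?R. Y i k * (if 2 \<le> j \<and> k = n+2-j then 1 else 0))"
    by (simp only: sum_subtractf)
  also have "\<dots> = Y i (n+1-j) - (if 2 \<le> j then Y i (n+2-j) else 0)"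
  proof -
    have c1: "True \<Longrightarrow> n+1-j \<in> ?R" and c2: "2 \<le> j \<Longrightarrow> n+2-j \<in> ?R" using True by auto
    show ?thesis unfolding sum_ind2[OF finite_atLeastAtMost]
      by (simp only: ind_simp[OF c1] ind_simp[OF c2] c1[OF TrueI] if_True simp_thms)
  qed
  finally show ?thesis using True by (simp only: if_True simp_thms)
qed (auto simp: mat_mul_def)

definition Cm :: "nat \<Rightarrow> nat \<Rightarrow> cmat" where
  "Cm n k i j = (if 1 \<le> i \<and> i \<le> n \<and> 1 \<le> j \<and> j \<le> n \<and> i \<le> j+k \<and> j \<le> i+k \<and> k+2 \<le> i+j \<and> i+j+k \<le> 2*n+1
     then (-1)^(i+j+k) else 0)"

lemma key:
  fixes n k i j :: nat
  assumes "1 \<le> i" "i \<le> n" "1 \<le> j" "j \<le> n"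
   "(n+1 \<le> i+j+k \<and> i+j \<le> n+1+k) \<noteq> (n+2 \<le> i+j+k \<and> i+j \<le> n+2+k)"
  shows "(k+1+i \<le> n+j \<and> j+k \<le> n+i) = (k+i \<le> n+j \<and> j+k+1 \<le> n+i)"
proof -
  have "i+j = n+2+k \<or> i+j+k = n+1" using assms(5) by arith
  then show ?thesis
  proof
    assume s: "i+j = n+2+k"
    have "k+i \<noteq> n+j" using s assms(1-4) by arith
    moreover have "j+k \<noteq> n+i" using s assms(1-4) by arith
    ultimately show ?thesis by arith
  next
    assume s: "i+j+k = n+1"
    have "k+i \<noteq> n+j" using s by presburger
    moreover have "j+k \<noteq> n+i" using s by presburger
    ultimately show ?thesis by arith
  qed
qed

lemma sgn_shift: "b = a + 2*m \<Longrightarrow> (-1::complex)^b = (-1)^a"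
  by (simp add: power_add power_mult)

lemma C_B: "mat_mul n (Bn n) (Cm n k) = mat_mul n (Cm n k) (Bn n)"
proof (intro ext)
  fix i j
  show "mat_mul n (Bn n) (Cm n k) i j = mat_mul n (Cm n k) (Bn n) i j"
  proof (cases "i\<in>{1..n} \<and> j\<in>{1..n}")
    case False then show ?thesis unfolding Bleft Bright by (simp only: if_not_P[OF False] if_False)
  next
    case True
    then have i1: "1 \<le> i" and i2: "i \<le> n" and j1: "1 \<le> j" and j2: "j \<le> n" by auto
    define \<sigma> :: complex where "\<sigma> = (-1)^(n+1+i+j+k)"
    define T0 where "T0 = (n+1 \<le> i+j+k \<and> i+j \<le> n+1+k)"
    define T1 where "T1 = (n+2 \<le> i+j+k \<and> i+j \<le> n+2+k)"
    define X where "X = (k+1+i \<le> n+j)"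
    define X' where "X' = (k+i \<le> n+j)"
    define Y where "Y = (j+k \<le> n+i)"
    define Y' where "Y' = (j+k+1 \<le> n+i)"
    have K: "T0 \<noteq> T1 \<Longrightarrow> (X \<and> Y) = (X' \<and> Y')"
      unfolding T0_def T1_def X_def Y_def X'_def Y'_def using key[OF i1 i2 j1 j2] by blast
    have v1: "Cm n k (n+1-i) j = (if T0 \<and> X \<and> Y then \<sigma> else 0)"
    proof -
      have c: "(1 \<le> n+1-i \<and> n+1-i \<le> n \<and> 1 \<le> j \<and> j \<le> n \<and> n+1-i \<le> j+k \<and> j \<le> n+1-i+k \<and> k+2 \<le> n+1-i+j \<and> n+1-i+j+k \<le> 2*n+1)
          = (T0 \<and> X \<and> Y)" unfolding T0_def X_def Y_def using i1 i2 j1 j2 by auto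
      have s: "(-1::complex)^(n+1-i+j+k) = \<sigma>" unfolding \<sigma>_def by (rule sgn_shift[symmetric, where m=i]) (use i2 in arith)
      show ?thesis unfolding Cm_def c s ..
    qed
    have v2: "(if 2 \<le> i then Cm n k (n+2-i) j else 0) = (if T1 \<and> X' \<and> Y' then -\<sigma> else 0)"
    proof (cases "2 \<le> i")
      case True
      have c: "(1 \<le> n+2-i \<and> n+2-i \<le> n \<and> 1 \<le> j \<and> j \<le> n \<and> n+2-i \<le> j+k \<and> j \<le> n+2-i+k \<and> k+2 \<le> n+2-i+j \<and> n+2-i+j+k \<le> 2*n+1)
          = (T1 \<and> X' \<and> Y')" unfolding T1_def X'_def Y'_def using True i1 i2 j1 j2 by auto
      have s: "(-1::complex)^(n+2-i+j+k) = -\<sigma>"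
      proof -
        have "(-1::complex)^(n+2-i+j+k) = (-1)^(Suc (n+1+i+j+k))"
          by (rule sgn_shift[symmetric, where m=i]) (use True i2 in arith)
        then show ?thesis unfolding \<sigma>_def by simp
      qed
      show ?thesis using True unfolding Cm_def c s by simp
    next
      case False
      have "\<not> (T1 \<and> X' \<and> Y')" unfolding T1_def X'_def Y'_def using False i1 by auto
      then show ?thesis using False by auto
    qed
    have v3: "Cm n k i (n+1-j) = (if T0 \<and> X' \<and> Y' then \<sigma> else 0)"
    proof -
      have c: "(1 \<le> i \<and> i \<le> n \<and> 1 \<le> n+1-j \<and> n+1-j \<le> n \<and> i \<le> n+1-j+k \<and> n+1-j \<le> i+k \<and> k+2 \<le> i+(n+1-j) \<and> i+(n+1-j)+k \<le> 2*n+1)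
          = (T0 \<and> X' \<and> Y')" unfolding T0_def X'_def Y'_def using i1 i2 j1 j2 by auto
      have s: "(-1::complex)^(i+(n+1-j)+k) = \<sigma>" unfolding \<sigma>_def by (rule sgn_shift[symmetric, where m=j]) (use j2 in arith)
      show ?thesis unfolding Cm_def c s ..
    qed
    have v4: "(if 2 \<le> j then Cm n k i (n+2-j) else 0) = (if T1 \<and> X \<and> Y then -\<sigma> else 0)"
    proof (cases "2 \<le> j")
      case True
      have c: "(1 \<le> i \<and> i \<le> n \<and> 1 \<le> n+2-j \<and> n+2-j \<le> n \<and> i \<le> n+2-j+k \<and> n+2-j \<le> i+k \<and> k+2 \<le> i+(n+2-j) \<and> i+(n+2-j)+k \<le> 2*n+1)
          = (T1 \<and> X \<and> Y)" unfolding T1_def X_def Y_def using True i1 i2 j1 j2 by auto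
      have s: "(-1::complex)^(i+(n+2-j)+k) = -\<sigma>"
      proof -
        have "(-1::complex)^(i+(n+2-j)+k) = (-1)^(Suc (n+1+i+j+k))"
          by (rule sgn_shift[symmetric, where m=j]) (use True j2 in arith)
        then show ?thesis unfolding \<sigma>_def by simp
      qed
      show ?thesis using True unfolding Cm_def c s by simp
    next
      case False
      have "\<not> (T1 \<and> X \<and> Y)" unfolding T1_def X_def Y_def using False j1 by auto
      then show ?thesis using False by auto
    qed
    have "mat_mul n (Bn n) (Cm n k) i j = (if T0 \<and> X \<and> Y then \<sigma> else 0) + (if T1 \<and> X' \<and> Y' then \<sigma> else 0)"
      unfolding Bleft using True v1 v2 by simp
    also have "\<dots> = (if T0 \<and> X' \<and> Y' then \<sigma> else 0) + (if T1 \<and> X \<and> Y then \<sigma> else 0)"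
      using K by (cases "T0 = T1") auto
    also have "\<dots> = mat_mul n (Cm n k) (Bn n) i j"
      unfolding Bright using True v3 v4 by simp
    finally show ?thesis .
  qed
qed




definition Tn :: "nat \<Rightarrow> cmat" where "Tn n = mat_mul n (Bn n) (Bn n)"

lemma Tleft: "mat_mul n (Tn n) Y i j = (if i\<in>{1..n} \<and> j\<in>{1..n} then
   Y i j - (if i+1 \<le> n then Y (i+1) j else 0) - (if 2 \<le> i then Y (i-1) j - Y i j else 0) else 0)"
proof (cases "i\<in>{1..n} \<and> j\<in>{1..n}")
  case True
  then have i: "i\<in>{1..n}" and j: "j\<in>{1..n}" by auto
  have "mat_mul n (Tn n) Y i j = mat_mul n (Bn n) (mat_mul n (Bn n) Y) i j"
    unfolding Tn_def mat_mul_assoc ..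
  also have "\<dots> = mat_mul n (Bn n) Y (n+1-i) j - (if 2 \<le> i then mat_mul n (Bn n) Y (n+2-i) j else 0)"
    unfolding Bleft[of n _ i j] using True by (simp only: if_True simp_thms)
  also have "mat_mul n (Bn n) Y (n+1-i) j = Y i j - (if i+1 \<le> n then Y (i+1) j else 0)"
  proof -
    have r: "n+1-i \<in> {1..n}" using i by auto
    have e: "n+1-(n+1-i) = i" "n+2-(n+1-i) = i+1" "(2 \<le> n+1-i) = (i+1 \<le> n)" using i by auto
    show ?thesis unfolding Bleft using r j by (simp only: e if_True simp_thms)
  qed
  also have "(if 2 \<le> i then mat_mul n (Bn n) Y (n+2-i) j else 0) = (if 2 \<le> i then Y (i-1) j - Y i j else 0)"
  proof (cases "2 \<le> i")
    case True
    have r: "n+2-i \<in> {1..n}" using i True by auto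
    have e: "n+1-(n+2-i) = i-1" "n+2-(n+2-i) = i" "(2 \<le> n+2-i) = True" using i True by auto
    show ?thesis unfolding Bleft using r j True by (simp only: e if_True simp_thms)
  qed simp
  finally show ?thesis using True by simp
qed (auto simp: mat_mul_def)

lemma Tright: "mat_mul n Y (Tn n) i j = (if i\<in>{1..n} \<and> j\<in>{1..n} then
   Y i j - (if j+1 \<le> n then Y i (j+1) else 0) - (if 2 \<le> j then Y i (j-1) - Y i j else 0) else 0)"
proof (cases "i\<in>{1..n} \<and> j\<in>{1..n}")
  case True
  then have i: "i\<in>{1..n}" and j: "j\<in>{1..n}" by auto
  have "mat_mul n Y (Tn n) i j = mat_mul n (mat_mul n Y (Bn n)) (Bn n) i j"
    unfolding Tn_def mat_mul_assoc ..
  also have "\<dots> = mat_mul n Y (Bn n) i (n+1-j) - (if 2 \<le> j then mat_mul n Y (Bn n) i (n+2-j) else 0)"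
    unfolding Bright[of n _ i j] using True by (simp only: if_True simp_thms)
  also have "mat_mul n Y (Bn n) i (n+1-j) = Y i j - (if j+1 \<le> n then Y i (j+1) else 0)"
  proof -
    have r: "n+1-j \<in> {1..n}" using j by auto
    have e: "n+1-(n+1-j) = j" "n+2-(n+1-j) = j+1" "(2 \<le> n+1-j) = (j+1 \<le> n)" using j by auto
    show ?thesis unfolding Bright using r i by (simp only: e if_True simp_thms)
  qed
  also have "(if 2 \<le> j then mat_mul n Y (Bn n) i (n+2-j) else 0) = (if 2 \<le> j then Y i (j-1) - Y i j else 0)"
  proof (cases "2 \<le> j")
    case True
    have r: "n+2-j \<in> {1..n}" using j True by auto
    have e: "n+1-(n+2-j) = j-1" "n+2-(n+2-j) = j" "(2 \<le> n+2-j) = True" using j True by auto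
    show ?thesis unfolding Bright using r i True by (simp only: e if_True simp_thms)
  qed simp
  finally show ?thesis using True by simp
qed (auto simp: mat_mul_def)

lemma T_det:
  assumes C: "mat_mul n (Tn n) c = mat_mul n c (Tn n)" and z: "\<And>i. i\<in>{1..n} \<Longrightarrow> c i 1 = 0"
  shows "\<And>i j. i\<in>{1..n} \<Longrightarrow> j\<in>{1..n} \<Longrightarrow> c i j = 0"
proof -
  have "\<forall>i\<in>{1..n}. c i j = 0" if "j\<in>{1..n}" for j
    using that
  proof (induction j rule: less_induct)
    case (less j)
    show ?case
    proof (cases "j = 1")
      case True then show ?thesis using z by simp
    next
      case False
      define m where "m = j - 1"
      have m: "m \<in> {1..n}" "j = m+1" using less.prems False unfolding m_def by auto
      have IHm: "\<forall>i\<in>{1..n}. c i m = 0" using less.IH[of m] m by auto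
      have IHm1: "2 \<le> m \<Longrightarrow> \<forall>i\<in>{1..n}. c i (m-1) = 0" using less.IH[of "m-1"] m by auto
      show ?thesis
      proof
        fix i assume i: "i\<in>{1..n}"
        have h1: "c (i-1) m = 0" if "2 \<le> i"
        proof -
          have "i-1 \<in> {1..n}" using i that by auto
          then show ?thesis using IHm by blast
        qed
        have h2: "c (i+1) m = 0" if "i+1 \<le> n"
        proof -
          have "i+1 \<in> {1..n}" using i that by auto
          then show ?thesis using IHm by blast
        qed
        have "mat_mul n (Tn n) c i m = 0"
          unfolding Tleft using i m IHm h1 h2 by auto
        moreover have "mat_mul n c (Tn n) i m = - c i (m+1)"
          unfolding Tright using i m IHm IHm1 less.prems by auto
        ultimately show "c i j = 0" using C m by (metis neg_equal_0_iff_equal)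
      qed
    qed
  qed
  then show "\<And>i j. i\<in>{1..n} \<Longrightarrow> j\<in>{1..n} \<Longrightarrow> c i j = 0" by blast
qed

lemma C_T: "mat_mul n (Tn n) (Cm n k) = mat_mul n (Cm n k) (Tn n)"
  unfolding Tn_def by (metis C_B mat_mul_assoc)

lemma Cm_sym: "Cm n k i j = Cm n k j i"
  unfolding Cm_def by (auto simp: add.commute)

lemma Cm_col1: "k < n \<Longrightarrow> Cm n k i 1 = (if i = k+1 then 1 else 0)"
proof -
  assume k: "k < n"
  show ?thesis
  proof (cases "i = k+1")
    case True
    have "(-1::complex)^(k+1+1+k) = 1" by (simp add: power_add power_mult[symmetric] mult_2[symmetric] )
    then show ?thesis using True k unfolding Cm_def by auto
  next
    case False then show ?thesis unfolding Cm_def by auto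
  qed
qed

lemma T_span:
  assumes C: "mat_mul n (Tn n) c = mat_mul n c (Tn n)" and i: "i\<in>{1..n}" and j: "j\<in>{1..n}"
  shows "c i j = (\<Sum>k<n. c (k+1) 1 * Cm n k i j)"
proof -
  define y where "y = c - (\<Sum>k<n. cscale (c (k+1) 1) (Cm n k))"
  have Cy: "mat_mul n (Tn n) y = mat_mul n y (Tn n)"
    unfolding y_def mat_mul_diff_left mat_mul_diff_right mat_mul_sum_left[OF finite_lessThan]
      mat_mul_sum_right[OF finite_lessThan] mat_mul_scale_left mat_mul_scale_right C C_T ..
  have yv: "y a b = c a b - (\<Sum>k<n. c (k+1) 1 * Cm n k a b)" for a b
    unfolding y_def by (simp add: sum_fun_app2)
  have z: "y a 1 = 0" if a: "a\<in>{1..n}" for a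
  proof -
    have "(\<Sum>k<n. c (k+1) 1 * Cm n k a 1) = (\<Sum>k<n. if k = a - 1 then c a 1 else 0)"
      using a by (intro sum.cong refl) (auto simp: Cm_col1[simplified])
    also have "\<dots> = c a 1"
    proof -
      have "a - 1 < n" using a by auto
      then show ?thesis by (simp add: sum.delta)
    qed
    finally show ?thesis unfolding yv by simp
  qed
  have "y i j = 0" by (rule T_det[OF Cy z i j])
  then show ?thesis unfolding yv by simp
qed

lemma T_skew:
  assumes C: "mat_mul n (Tn n) c = mat_mul n c (Tn n)"
    and sk: "\<And>i j. i\<in>{1..n} \<Longrightarrow> j\<in>{1..n} \<Longrightarrow> c i j = - c j i"
    and i: "i\<in>{1..n}" and j: "j\<in>{1..n}"
  shows "c i j = 0"
proof -
  have "c i j = c j i" unfolding T_span[OF C i j] T_span[OF C j i] by (simp add: Cm_sym)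
  then show ?thesis using sk[OF i j] by simp
qed




definition emb :: "nat \<Rightarrow> cmat \<Rightarrow> cmat" where
  "emb n a i j = (if i\<in>{1..n} \<and> j\<in>{1..n} then a i j
     else if i\<in>{n+2..2*n+1} \<and> j\<in>{n+2..2*n+1} then - a (2*n+2-j) (2*n+2-i) else 0)"

lemma emb_11: "i\<in>{1..n} \<Longrightarrow> j\<in>{1..n} \<Longrightarrow> emb n a i j = a i j"
  unfolding emb_def by simp
lemma emb_33: "i\<in>{n+2..2*n+1} \<Longrightarrow> j\<in>{n+2..2*n+1} \<Longrightarrow> emb n a i j = - a (2*n+2-j) (2*n+2-i)"
  unfolding emb_def by auto
lemma emb_0: "\<not> (i\<in>{1..n} \<and> j\<in>{1..n}) \<Longrightarrow> \<not> (i\<in>{n+2..2*n+1} \<and> j\<in>{n+2..2*n+1}) \<Longrightarrow> emb n a i j = 0"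
proof -
  assume h1: "\<not> (i\<in>{1..n} \<and> j\<in>{1..n})" and h2: "\<not> (i\<in>{n+2..2*n+1} \<and> j\<in>{n+2..2*n+1})"
  show ?thesis unfolding emb_def by (simp only: if_not_P[OF h1] if_not_P[OF h2])
qed

lemma emb_13: "p \<le> n \<Longrightarrow> n+2 \<le> q \<Longrightarrow> emb n a p q = 0"
  by (rule emb_0) auto
lemma emb_31: "n+2 \<le> p \<Longrightarrow> q \<le> n \<Longrightarrow> emb n a p q = 0"
  by (rule emb_0) auto

lemma emb_so: "emb n a \<in> so_odd n"
proof -
  have "supported (2*n+1) (emb n a)"
    unfolding supported_def using emb_0[of _ n _ a] by fastforce
  moreover have "emb n a i j = - emb n a (2*n+2-j) (2*n+2-i)"
    if i: "i\<in>{1..2*n+1}" and j: "j\<in>{1..2*n+1}" for i j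
  proof -
    consider (A) "i\<in>{1..n} \<and> j\<in>{1..n}" | (B) "i\<in>{n+2..2*n+1} \<and> j\<in>{n+2..2*n+1}"
      | (C) "\<not> (i\<in>{1..n} \<and> j\<in>{1..n})" "\<not> (i\<in>{n+2..2*n+1} \<and> j\<in>{n+2..2*n+1})" by blast
    then show ?thesis
    proof cases
      case A
      have r: "2*n+2-j \<in> {n+2..2*n+1}" "2*n+2-i \<in> {n+2..2*n+1}" "2*n+2-(2*n+2-i) = i" "2*n+2-(2*n+2-j) = j"
        using A by auto
      show ?thesis using A by (simp only: emb_11 emb_33[OF r(1,2)] r(3,4) minus_minus)
    next
      case B
      have r: "2*n+2-j \<in> {1..n}" "2*n+2-i \<in> {1..n}" using B by auto
      show ?thesis using B by (simp only: emb_33 emb_11[OF r(1,2)] minus_minus)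
    next
      case C
      have r: "\<not> (2*n+2-j\<in>{1..n} \<and> 2*n+2-i\<in>{1..n})" "\<not> (2*n+2-j\<in>{n+2..2*n+1} \<and> 2*n+2-i\<in>{n+2..2*n+1})"
        using C i j by auto
      show ?thesis using emb_0[OF C] emb_0[OF r] by simp
    qed
  qed
  ultimately show ?thesis unfolding so_odd_def by blast
qed

lemma emb_col: "emb n a i (n+1) = 0" "emb n a (n+1) i = 0" "emb n a i (Suc n) = 0" "emb n a (Suc n) i = 0"
  by (auto intro: emb_0)


lemma emb_Q:
  assumes BA: "mat_mul n (Bn n) a = mat_mul n a (Bn n)"
  shows "mat_mul (2*n+1) (Qm n) (emb n a) = mat_mul (2*n+1) (emb n a) (Qm n)"
proof (intro ext)
  fix i j
  let ?E = "emb n a"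
  show "mat_mul (2*n+1) (Qm n) ?E i j = mat_mul (2*n+1) ?E (Qm n) i j"
  proof (cases "i\<in>{1..2*n+1} \<and> j\<in>{1..2*n+1}")
    case False then show ?thesis unfolding Qleft Qright by (simp only: if_not_P[OF False] if_False)
  next
    case True
    then have i: "i\<in>{1..2*n+1}" and j: "j\<in>{1..2*n+1}" by auto
    consider (a) "i \<le> n" | (b) "i = n+1" | (c) "n+2 \<le> i" by linarith
    note ci = this
    consider (a) "j \<le> n" | (b) "j = n+1" | (c) "n+2 \<le> j" by linarith
    note cj = this
    show ?thesis
    proof (cases rule: ci)
      case a
      then have i': "i\<in>{1..n}" using i by auto
      have L: "mat_mul (2*n+1) (Qm n) ?E i j = ?E (n+1-i) j - (if 2 \<le> i then ?E (n+2-i) j else 0)"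
        unfolding Qleft using i j a by simp
      show ?thesis
      proof (cases rule: cj)
        case a
        then have j': "j\<in>{1..n}" using j by auto
        have R: "mat_mul (2*n+1) ?E (Qm n) i j = ?E i (n+1-j) - (if 2 \<le> j then ?E i (n+2-j) else 0)"
          unfolding Qright using i j a by simp
        have r1: "n+1-i \<in> {1..n}" using i' by auto
        have r2: "2 \<le> i \<Longrightarrow> n+2-i \<in> {1..n}" using i' by auto
        have "?E (n+1-i) j = a (n+1-i) j" by (rule emb_11[OF r1 j'])
        moreover have "2 \<le> i \<Longrightarrow> ?E (n+2-i) j = a (n+2-i) j" by (rule emb_11[OF r2 j'])
        ultimately have "?E (n+1-i) j - (if 2 \<le> i then ?E (n+2-i) j else 0) = mat_mul n (Bn n) a i j"
          unfolding Bleft using i' j' by simp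
        moreover have "?E i (n+1-j) - (if 2 \<le> j then ?E i (n+2-j) else 0) = mat_mul n a (Bn n) i j"
        proof -
          have r1: "n+1-j \<in> {1..n}" using j' by auto
          have r2: "2 \<le> j \<Longrightarrow> n+2-j \<in> {1..n}" using j' by auto
          have "?E i (n+1-j) = a i (n+1-j)" by (rule emb_11[OF i' r1])
          moreover have "2 \<le> j \<Longrightarrow> ?E i (n+2-j) = a i (n+2-j)" by (rule emb_11[OF i' r2])
          ultimately show ?thesis unfolding Bright using i' j' by simp
        qed
        ultimately show ?thesis using L R BA by simp
      next
        case b
        then show ?thesis unfolding L Qright using i j a by (simp add: emb_col)
      next
        case c
        have R: "mat_mul (2*n+1) ?E (Qm n) i j = - ?E i (3*n+3-j) + (if j \<le> 2*n then ?E i (3*n+2-j) else 0)"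
          unfolding Qright using i j c by simp
        have z: "?E (n+1-i) j = 0" "2 \<le> i \<Longrightarrow> ?E (n+2-i) j = 0" "?E i (3*n+3-j) = 0" "j \<le> 2*n \<Longrightarrow> ?E i (3*n+2-j) = 0"
          using a c i j by (auto intro!: emb_13)
        show ?thesis unfolding L R using z by simp
      qed
    next
      case b
      have L: "mat_mul (2*n+1) (Qm n) ?E i j = 0" unfolding Qleft using b by simp
      have R: "mat_mul (2*n+1) ?E (Qm n) i j = 0" unfolding Qright using b by (simp add: emb_col)
      show ?thesis using L R by simp
    next
      case c
      have L: "mat_mul (2*n+1) (Qm n) ?E i j = - ?E (3*n+3-i) j + (if i \<le> 2*n then ?E (3*n+2-i) j else 0)"
        unfolding Qleft using i j c by simp
      show ?thesis
      proof (cases rule: cj)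
        case a
        have R: "mat_mul (2*n+1) ?E (Qm n) i j = ?E i (n+1-j) - (if 2 \<le> j then ?E i (n+2-j) else 0)"
          unfolding Qright using i j a by simp
        have z: "?E (3*n+3-i) j = 0" "i \<le> 2*n \<Longrightarrow> ?E (3*n+2-i) j = 0" "?E i (n+1-j) = 0" "2 \<le> j \<Longrightarrow> ?E i (n+2-j) = 0"
        proof -
          show "?E (3*n+3-i) j = 0" by (rule emb_31) (use a c i j in auto)
          show "i \<le> 2*n \<Longrightarrow> ?E (3*n+2-i) j = 0" by (rule emb_31) (use a c i j in auto)
          show "?E i (n+1-j) = 0" by (rule emb_31) (use a c i j in auto)
          show "2 \<le> j \<Longrightarrow> ?E i (n+2-j) = 0" by (rule emb_31) (use a c i j in auto)
        qed
        show ?thesis unfolding L R using z by simp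
      next
        case b
        then show ?thesis unfolding L Qright using i j c by (simp add: emb_col)
      next
        case c2: c
        have R: "mat_mul (2*n+1) ?E (Qm n) i j = - ?E i (3*n+3-j) + (if j \<le> 2*n then ?E i (3*n+2-j) else 0)"
          unfolding Qright using i j c2 by simp
        define i' where "i' = 2*n+2-i"
        define j' where "j' = 2*n+2-j"
        have i': "i'\<in>{1..n}" and j': "j'\<in>{1..n}" using i j c c2 unfolding i'_def j'_def by auto
        have e1: "- ?E (3*n+3-i) j + (if i \<le> 2*n then ?E (3*n+2-i) j else 0) = mat_mul n a (Bn n) j' i'"
        proof -
          have "?E (3*n+3-i) j = - a j' (n+1-i')"
            using i j c c2 unfolding i'_def j'_def by (subst emb_33) (auto intro!: arg_cong2[where f=a])
          moreover have "i \<le> 2*n \<Longrightarrow> ?E (3*n+2-i) j = - a j' (n+2-i')"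
            using i j c c2 unfolding i'_def j'_def by (subst emb_33) (auto intro!: arg_cong2[where f=a])
          moreover have "(i \<le> 2*n) = (2 \<le> i')" using i unfolding i'_def by auto
          ultimately show ?thesis unfolding Bright using i' j' by auto
        qed
        have e2: "- ?E i (3*n+3-j) + (if j \<le> 2*n then ?E i (3*n+2-j) else 0) = mat_mul n (Bn n) a j' i'"
        proof -
          have "?E i (3*n+3-j) = - a (n+1-j') i'"
            using i j c c2 unfolding i'_def j'_def by (subst emb_33) (auto intro!: arg_cong2[where f=a])
          moreover have "j \<le> 2*n \<Longrightarrow> ?E i (3*n+2-j) = - a (n+2-j') i'"
            using i j c c2 unfolding i'_def j'_def by (subst emb_33) (auto intro!: arg_cong2[where f=a])
          moreover have "(j \<le> 2*n) = (2 \<le> j')" using j unfolding j'_def by auto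
          ultimately show ?thesis unfolding Bleft using i' j' by auto
        qed
        show ?thesis unfolding L R e1 e2 BA ..
      qed
    qed
  qed
qed




lemma QL1: "i\<in>{1..n} \<Longrightarrow> j\<in>{1..2*n+1} \<Longrightarrow> mat_mul (2*n+1) (Qm n) Y i j = Y (n+1-i) j - (if 2 \<le> i then Y (n+2-i) j else 0)"
  unfolding Qleft by simp
lemma QL3: "i\<in>{n+2..2*n+1} \<Longrightarrow> j\<in>{1..2*n+1} \<Longrightarrow> mat_mul (2*n+1) (Qm n) Y i j = - Y (3*n+3-i) j + (if i \<le> 2*n then Y (3*n+2-i) j else 0)"
  unfolding Qleft by simp
lemma QR1: "i\<in>{1..2*n+1} \<Longrightarrow> j\<in>{1..n} \<Longrightarrow> mat_mul (2*n+1) Y (Qm n) i j = Y i (n+1-j) - (if 2 \<le> j then Y i (n+2-j) else 0)"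
  unfolding Qright by simp
lemma QR3: "i\<in>{1..2*n+1} \<Longrightarrow> j\<in>{n+2..2*n+1} \<Longrightarrow> mat_mul (2*n+1) Y (Qm n) i j = - Y i (3*n+3-j) + (if j \<le> 2*n then Y i (3*n+2-j) else 0)"
  unfolding Qright by simp

lemma anti_T:
  assumes "mat_mul n (Bn n) c = - mat_mul n c (Bn n)"
  shows "mat_mul n (Tn n) c = mat_mul n c (Tn n)"
proof -
  let ?m = "mat_mul n" and ?B = "Bn n"
  have "?m (Tn n) c = ?m ?B (?m ?B c)" unfolding Tn_def mat_mul_assoc ..
  also have "\<dots> = - ?m ?B (?m c ?B)" unfolding assms mat_mul_neg_right ..
  also have "\<dots> = - ?m (?m ?B c) ?B" unfolding mat_mul_assoc ..
  also have "\<dots> = ?m (?m c ?B) ?B" unfolding assms mat_mul_neg_left by simp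
  also have "\<dots> = ?m c (Tn n)" unfolding Tn_def mat_mul_assoc ..
  finally show ?thesis .
qed

lemma comm_T:
  assumes "mat_mul n (Bn n) c = mat_mul n c (Bn n)"
  shows "mat_mul n (Tn n) c = mat_mul n c (Tn n)"
  unfolding Tn_def by (metis assms mat_mul_assoc)

lemma Zk_ker: "emb n (Cm n k) \<in> kirillov_ker (so_odd n) (lie_br (2*n+1)) (F_fun n)"
  unfolding ker_char
  using emb_so[of n "Cm n k"] Q_ker[OF so_supp[OF emb_so] emb_col(1,2) emb_Q[OF C_B]] by blast

lemma ker_decomp:
  assumes K: "x \<in> kirillov_ker (so_odd n) (lie_br (2*n+1)) (F_fun n)"
  shows "x = (\<Sum>k<n. cscale (x (k+1) 1) (emb n (Cm n k)))"
proof -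
  have x: "x \<in> so_odd n" and PC: "mat_mul (2*n+1) (Pm n) x = mat_mul (2*n+1) x (Pm n)"
    using K unfolding ker_char by auto
  have QC: "mat_mul (2*n+1) (Qm n) x i j = mat_mul (2*n+1) x (Qm n) i j" for i j
    using ker_Q[OF x PC] by simp
  note cz = ker_col[OF x PC]
  note supp = supp_out[OF so_supp[OF x]]
  define a where "a = (\<lambda>i j. if i\<in>{1..n} \<and> j\<in>{1..n} then x i j else 0)"
  define c where "c = (\<lambda>i j. if i\<in>{1..n} \<and> j\<in>{1..n} then x i (2*n+2-j) else 0)"
  define d where "d = (\<lambda>i j. if i\<in>{1..n} \<and> j\<in>{1..n} then x (2*n+2-i) j else 0)"
  have BA: "mat_mul n (Bn n) a = mat_mul n a (Bn n)"
  proof (intro ext)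
    fix i j
    show "mat_mul n (Bn n) a i j = mat_mul n a (Bn n) i j"
    proof (cases "i\<in>{1..n} \<and> j\<in>{1..n}")
      case False then show ?thesis unfolding Bleft Bright by (simp only: if_not_P[OF False] if_False)
    next
      case True
      then have i: "i\<in>{1..n}" and j: "j\<in>{1..n}" by auto
      have iN: "i\<in>{1..2*n+1}" and jN: "j\<in>{1..2*n+1}" using i j by auto
      have r: "n+1-i \<in> {1..n}" "2 \<le> i \<Longrightarrow> n+2-i \<in> {1..n}" "n+1-j \<in> {1..n}" "2 \<le> j \<Longrightarrow> n+2-j \<in> {1..n}"
        using i j by auto
      have "mat_mul n (Bn n) a i j = x (n+1-i) j - (if 2 \<le> i then x (n+2-i) j else 0)"
        unfolding Bleft using i j r by (simp add: a_def)
      also have "\<dots> = mat_mul (2*n+1) (Qm n) x i j" using QL1[OF i jN] by simp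
      also have "\<dots> = mat_mul (2*n+1) x (Qm n) i j" by (rule QC)
      also have "\<dots> = x i (n+1-j) - (if 2 \<le> j then x i (n+2-j) else 0)" using QR1[OF iN j] by simp
      also have "\<dots> = mat_mul n a (Bn n) i j"
        unfolding Bright using i j r by (simp add: a_def)
      finally show ?thesis .
    qed
  qed
  have BC: "mat_mul n (Bn n) c = - mat_mul n c (Bn n)"
  proof (intro ext)
    fix i j
    show "mat_mul n (Bn n) c i j = (- mat_mul n c (Bn n)) i j"
    proof (cases "i\<in>{1..n} \<and> j\<in>{1..n}")
      case False then show ?thesis unfolding Bleft Bright uminus_apply by (simp only: if_not_P[OF False] if_False minus_zero)
    next
      case True
      then have i: "i\<in>{1..n}" and j: "j\<in>{1..n}" by auto
      define J where "J = 2*n+2-j"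
      have iN: "i\<in>{1..2*n+1}" and JN: "J\<in>{n+2..2*n+1}" "J\<in>{1..2*n+1}" using i j unfolding J_def by auto
      have r: "n+1-i \<in> {1..n}" "2 \<le> i \<Longrightarrow> n+2-i \<in> {1..n}" "n+1-j \<in> {1..n}" "2 \<le> j \<Longrightarrow> n+2-j \<in> {1..n}"
        using i j by auto
      have e: "3*n+3-J = 2*n+2-(n+1-j)" "2 \<le> j \<Longrightarrow> 3*n+2-J = 2*n+2-(n+2-j)" "(J \<le> 2*n) = (2 \<le> j)"
        using j unfolding J_def by auto
      have "mat_mul n (Bn n) c i j = x (n+1-i) J - (if 2 \<le> i then x (n+2-i) J else 0)"
        unfolding Bleft using i j r by (simp add: c_def J_def)
      also have "\<dots> = mat_mul (2*n+1) (Qm n) x i J" using QL1[OF i JN(2)] by simp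
      also have "\<dots> = mat_mul (2*n+1) x (Qm n) i J" by (rule QC)
      also have "\<dots> = - x i (3*n+3-J) + (if J \<le> 2*n then x i (3*n+2-J) else 0)" using QR3[OF iN JN(1)] by simp
      also have "\<dots> = - (c i (n+1-j) - (if 2 \<le> j then c i (n+2-j) else 0))"
        using r e i by (auto simp: c_def)
      also have "\<dots> = (- mat_mul n c (Bn n)) i j"
        unfolding uminus_apply Bright using i j by simp
      finally show ?thesis .
    qed
  qed
  have BD: "mat_mul n (Bn n) d = - mat_mul n d (Bn n)"
  proof (intro ext)
    fix i j
    show "mat_mul n (Bn n) d i j = (- mat_mul n d (Bn n)) i j"
    proof (cases "i\<in>{1..n} \<and> j\<in>{1..n}")
      case False then show ?thesis unfolding Bleft Bright uminus_apply by (simp only: if_not_P[OF False] if_False minus_zero)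
    next
      case True
      then have i: "i\<in>{1..n}" and j: "j\<in>{1..n}" by auto
      define I where "I = 2*n+2-i"
      have jN: "j\<in>{1..2*n+1}" and IN: "I\<in>{n+2..2*n+1}" "I\<in>{1..2*n+1}" using i j unfolding I_def by auto
      have r: "n+1-i \<in> {1..n}" "2 \<le> i \<Longrightarrow> n+2-i \<in> {1..n}" "n+1-j \<in> {1..n}" "2 \<le> j \<Longrightarrow> n+2-j \<in> {1..n}"
        using i j by auto
      have e: "3*n+3-I = 2*n+2-(n+1-i)" "2 \<le> i \<Longrightarrow> 3*n+2-I = 2*n+2-(n+2-i)" "(I \<le> 2*n) = (2 \<le> i)"
        using i unfolding I_def by auto
      have "mat_mul n d (Bn n) i j = x I (n+1-j) - (if 2 \<le> j then x I (n+2-j) else 0)"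
        unfolding Bright using i j r by (simp add: d_def I_def)
      also have "\<dots> = mat_mul (2*n+1) x (Qm n) I j" using QR1[OF IN(2) j] by simp
      also have "\<dots> = mat_mul (2*n+1) (Qm n) x I j" by (rule QC[symmetric])
      also have "\<dots> = - x (3*n+3-I) j + (if I \<le> 2*n then x (3*n+2-I) j else 0)" using QL3[OF IN(1) jN] by simp
      also have "\<dots> = - (d (n+1-i) j - (if 2 \<le> i then d (n+2-i) j else 0))"
        using r e j by (auto simp: d_def)
      also have "\<dots> = - mat_mul n (Bn n) d i j"
        unfolding Bleft using i j by simp
      finally show ?thesis by simp
    qed
  qed
  have c0: "c i j = 0" if "i\<in>{1..n}" "j\<in>{1..n}" for i j
  proof (rule T_skew[OF anti_T[OF BC] _ that])
    fix p q assume p: "p\<in>{1..n}" and q: "q\<in>{1..n}"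
    have r: "p \<in> {1..2*n+1}" "2*n+2-q \<in> {1..2*n+1}" "2*n+2-(2*n+2-q) = q" using p q by auto
    show "c p q = - c q p" using so_entry[OF x r(1,2)] p q unfolding c_def r(3) by simp
  qed
  have d0: "d i j = 0" if "i\<in>{1..n}" "j\<in>{1..n}" for i j
  proof (rule T_skew[OF anti_T[OF BD] _ that])
    fix p q assume p: "p\<in>{1..n}" and q: "q\<in>{1..n}"
    have r: "2*n+2-p \<in> {1..2*n+1}" "q \<in> {1..2*n+1}" "2*n+2-(2*n+2-p) = p" using p q by auto
    show "d p q = - d q p" using so_entry[OF x r(1,2)] p q unfolding d_def r(3) by simp
  qed
  have aS: "a i j = (\<Sum>k<n. x (k+1) 1 * Cm n k i j)" if "i\<in>{1..n}" "j\<in>{1..n}" for i j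
  proof -
    have "a i j = (\<Sum>k<n. a (k+1) 1 * Cm n k i j)" by (rule T_span[OF comm_T[OF BA] that])
    also have "\<dots> = (\<Sum>k<n. x (k+1) 1 * Cm n k i j)"
      by (intro sum.cong refl) (auto simp: a_def)
    finally show ?thesis .
  qed
  show ?thesis
  proof (intro ext)
    fix i j
    have rhs: "(\<Sum>k<n. cscale (x (k+1) 1) (emb n (Cm n k))) i j = (\<Sum>k<n. x (k+1) 1 * emb n (Cm n k) i j)"
      by (simp add: sum_fun_app2)
    consider (A) "i\<in>{1..n}" "j\<in>{1..n}" | (B) "i\<in>{n+2..2*n+1}" "j\<in>{n+2..2*n+1}"
      | (C) "i\<in>{1..n}" "j\<in>{n+2..2*n+1}" | (D) "i\<in>{n+2..2*n+1}" "j\<in>{1..n}"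
      | (E) "i = n+1 \<or> j = n+1" | (F) "\<not> (i\<in>{1..2*n+1} \<and> j\<in>{1..2*n+1})"
      by (cases "i \<le> n"; cases "j \<le> n"; cases "i = n+1"; cases "j = n+1"; auto)
    then show "x i j = (\<Sum>k<n. cscale (x (k+1) 1) (emb n (Cm n k))) i j"
    proof cases
      case A
      then show ?thesis unfolding rhs using aS[OF A] by (simp add: emb_11 a_def)
    next
      case B
      have r: "2*n+2-j \<in> {1..n}" "2*n+2-i \<in> {1..n}" "i \<in> {1..2*n+1}" "j \<in> {1..2*n+1}" using B by auto
      have "x i j = - a (2*n+2-j) (2*n+2-i)" using so_entry[OF x r(3,4)] r(1,2) by (simp add: a_def)
      also have "\<dots> = (\<Sum>k<n. x (k+1) 1 * emb n (Cm n k) i j)"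
        unfolding aS[OF r(1,2)] emb_33[OF B] by (simp add: sum_negf[symmetric])
      finally show ?thesis unfolding rhs .
    next
      case C
      have r: "2*n+2-j \<in> {1..n}" "2*n+2-(2*n+2-j) = j" using C by auto
      have "x i j = c i (2*n+2-j)" using C r by (simp add: c_def)
      also have "\<dots> = 0" using c0 C r by simp
      finally show ?thesis unfolding rhs using C by (simp add: emb_13)
    next
      case D
      have r: "2*n+2-i \<in> {1..n}" "2*n+2-(2*n+2-i) = i" using D by auto
      have "x i j = d (2*n+2-i) j" using D r by (simp add: d_def)
      also have "\<dots> = 0" using d0 D r by simp
      finally show ?thesis unfolding rhs using D by (simp add: emb_31)
    next
      case E
      then show ?thesis unfolding rhs using cz by (auto simp: emb_col)
    next
      case F
      then have "\<not> (i\<in>{1..n} \<and> j\<in>{1..n})" "\<not> (i\<in>{n+2..2*n+1} \<and> j\<in>{n+2..2*n+1})" by auto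
      then show ?thesis unfolding rhs using supp[OF F] by (simp add: emb_0)
    qed
  qed
qed


theorem theorem4p17:
  fixes n :: nat
  assumes "n \<ge> 1"
  shows "cmat_vs.dim (kirillov_ker (so_odd n) (lie_br (2*n+1)) (F_fun n)) = n"
proof -
  let ?K = "kirillov_ker (so_odd n) (lie_br (2*n+1)) (F_fun n)"
  let ?Z = "\<lambda>k. emb n (Cm n k)"
  let ?S = "?Z ` {..<n}"
  have Zv: "?Z k (l+1) 1 = (if l = k then 1 else 0)" if "k < n" "l < n" for k l
  proof -
    have "?Z k (l+1) 1 = Cm n k (l+1) 1" using that by (intro emb_11) auto
    also have "\<dots> = (if l = k then 1 else 0)" using Cm_col1[OF that(1)] by simp
    finally show ?thesis .
  qed
  have inj: "inj_on ?Z {..<n}"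
  proof (rule inj_onI)
    fix k l assume k: "k \<in> {..<n}" and l: "l \<in> {..<n}" and e: "?Z k = ?Z l"
    have "?Z k (k+1) 1 = ?Z l (k+1) 1" using e by simp
    then show "k = l" using Zv[of k k] Zv[of l k] k l by (auto split: if_splits)
  qed
  have card: "card ?S = n" using card_image[OF inj] by simp
  have sub: "?S \<subseteq> ?K" using Zk_ker by blast
  have span: "?K \<subseteq> cmat_vs.span ?S"
  proof
    fix x assume x: "x \<in> ?K"
    have "(\<Sum>k<n. cscale (x (k+1) 1) (?Z k)) \<in> cmat_vs.span ?S"
      by (intro cmat_vs.span_sum cmat_vs.span_scale cmat_vs.span_base) auto
    then show "x \<in> cmat_vs.span ?S" using ker_decomp[OF x] by simp
  qed
  have ind: "cmat_vs.independent ?S"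
  proof (rule cmat_vs.independent_if_scalars_zero)
    show "finite ?S" by simp
  next
    fix u v assume s: "(\<Sum>v\<in>?S. cscale (u v) v) = 0" and v: "v \<in> ?S"
    then obtain k where k: "k < n" and vk: "v = ?Z k" by auto
    have "(\<Sum>l<n. cscale (u (?Z l)) (?Z l)) = 0" using s by (simp add: sum.reindex[OF inj])
    then have "(\<Sum>l<n. cscale (u (?Z l)) (?Z l)) (k+1) 1 = 0" by simp
    then have "(\<Sum>l<n. u (?Z l) * ?Z l (k+1) 1) = 0" by (simp add: sum_fun_app2)
    moreover have "(\<Sum>l<n. u (?Z l) * ?Z l (k+1) 1) = u (?Z k)"
    proof -
      have "(\<Sum>l<n. u (?Z l) * ?Z l (k+1) 1) = (\<Sum>l<n. if l = k then u (?Z l) else 0)"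
        using k by (intro sum.cong refl) (auto simp: Zv[simplified])
      also have "\<dots> = u (?Z k)" using k by (simp add: sum.delta)
      finally show ?thesis .
    qed
    ultimately show "u v = 0" using vk by simp
  qed
  have "card ?S = cmat_vs.dim ?K" by (rule cmat_vs.basis_card_eq_dim[OF sub span ind])
  then show ?thesis using card by simp
qed



end
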